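(* Let $M_t=M_{y(t)}$, $y(t)=e^{i\theta(t)}$, $\theta(0)=\theta_0$, be the (ancient) spherical mean curvature flow of isoparametric hypersurfaces in $S^{n+1}$ with $g$ distinct principal curvatures, and let $A(t)$, $H(t)$ be the shape operator and (scalar) mean curvature of $M_t$ in $S^{n+1}$. Then $$\lim_{t\to-\infty}\|A(t)\|^2=(g-1)n.$$ If $M_0$ is not minimal, then $$\lim_{t\to-\infty}H^2(t)\,e^{-2gnt}=C_0,\qquad C_0=\frac{n^2(\cos g\theta_0+\delta)^2}{1-\delta^2}>0.$$
   Context: Let $M^n$ be a compact isoparametric hypersurface in the unit sphere $S^{n+1}\subset\mathbb{R}^{n+2}$ (constant principal curvatures) with $g$ distinct principal curvatures; then $g\in\{1,2,3,4,6\}$. Fix $x_0\in M$ and identify the 2-dimensional normal space $\nu_{x_0}M$ of $M$ in $\mathbb{R}^{n+2}$ with $\mathbb{C}$ so that the two focal submanifolds $M_+$, $M_-$ ($\dim M_+\le\dim M_-$) meet the normal circle at $1$ and $e^{i\pi/g}$ (the intersection points closest to $x_0$). The Weyl chamber is $C=\{re^{i\theta}:r>0,\ 0<\theta<\pi/g\}$. For $k=1,\dots,g$ let $\theta_k=k\pi/g-\pi/2$, $\alpha_k=e^{i\theta_k}$, and $m_k=m_1$ for $k$ odd, $m_k=m_2$ for $k$ even, where $(m_1,m_2)$, $m_1\le m_2$, is the multiplicity data of the principal curvatures; $m_1=m_2$ if $g$ is odd, and $(m_1+m_2)g=2n$. For $x\in C$, $M_x=\{p+\tilde\xi(p):p\in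 M\}$ where $\tilde\xi$ is the parallel normal field on $M$ with $\tilde\xi(x_0)=x-x_0$; it is an $n$-dimensional isoparametric submanifold of $\mathbb{R}^{n+2}$ lying in $S^{n+1}(|x|)$, with normal space $\nu_{x_0}M$ at $x$, and $T_xM_x=\oplus_kE_k$, $\dim E_k=m_k$, with Euclidean shape operator $A_\xi|_{E_k}=\langle\xi,-\alpha_k/\langle x,\alpha_k\rangle\rangle\mathrm{Id}$ ($\langle\cdot,\cdot\rangle$ the real inner product on $\mathbb{C}=\mathbb{R}^2$). $H^E(x),A^E(x)$ denote mean curvature vector and shape operator of $M_x$ at $x$ in $\mathbb{R}^{n+2}$; $H^S(x),A^S(x)$ those of $M_x$ as a hypersurface of $S^{n+1}(|x|)$; $\|A\|^2$ is the sum of squared Hilbert–Schmidt norms over an orthonormal normal basis. Set $\delta=(m_2-m_1)/(m_2+m_1)$ if $g\ge2$ and $\delta=0$ if $g=1$, and let $\theta_{\min}\in(0,\pi/g)$ be defined by $\cos g\theta_{\min}=-\delta$. The spherical MCF of $M_{y(0)}$ is the family $M_{y(t)}$ with $y(t)\in C$ unit and $y'(t)=H^S(y(t))$; it exists for all $t\le 0$. In the claim $A(t)=A^S(y(t))$ and $H^2(t)=\|H^S(y(t))\|^2$. *)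

theory Defs
  imports "HOL-Analysis.Analysis"
begin

text \<open>The normal plane of M at x0 is identified with the complex plane (as a real inner
  product space, inner product = real part of x * cnj y). All geometric quantities of the
  isoparametric submanifold M_x at x are expressed through the given data: the curvature
  normals alpha_k and the multiplicities m_k of the curvature distributions E_k.\<close>

definition iso_admissible :: "nat \<Rightarrow> nat \<Rightarrow> nat \<Rightarrow> nat \<Rightarrow> bool" where
  "iso_admissible g m1 m2 n \<longleftrightarrow> g \<in> {1,2,3,4,6} \<and> 1 \<le> m1 \<and> m1 \<le> m2 \<and>
     (odd g \<longrightarrow> m1 = m2) \<and> (m1 + m2) * g = 2 * n"

definition alpha :: "nat \<Rightarrow> nat \<Rightarrow> complex" where
  "alpha g k = cis (real k * pi / real g - pi / 2)"

definition mult :: "nat \<Rightarrow> nat \<Rightarrow> nat \<Rightarrow> nat" where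
  "mult m1 m2 k = (if odd k then m1 else m2)"

definition weyl_chamber :: "nat \<Rightarrow> complex set" where
  "weyl_chamber g = {complex_of_real r * cis \<theta> | r \<theta>. r > 0 \<and> 0 < \<theta> \<and> \<theta> < pi / real g}"

definition delta :: "nat \<Rightarrow> nat \<Rightarrow> nat \<Rightarrow> real" where
  "delta g m1 m2 = (if g \<ge> 2 then (real m2 - real m1) / (real m2 + real m1) else 0)"

text \<open>Eigenvalue of the Euclidean shape operator A_xi of M_x at x on E_k.\<close>
definition shapeE :: "nat \<Rightarrow> complex \<Rightarrow> complex \<Rightarrow> nat \<Rightarrow> real" where
  "shapeE g x \<xi> k = \<xi> \<bullet> (- alpha g k / complex_of_real (x \<bullet> alpha g k))"

text \<open>Euclidean mean curvature vector H^E(x) (trace of xi |-> A_xi, as a normal vector).\<close>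
definition HE :: "nat \<Rightarrow> nat \<Rightarrow> nat \<Rightarrow> complex \<Rightarrow> complex" where
  "HE g m1 m2 x = (\<Sum>k=1..g. of_nat (mult m1 m2 k) * (- alpha g k / complex_of_real (x \<bullet> alpha g k)))"

text \<open>Spherical mean curvature vector: component of H^E tangent to the sphere S^{n+1}(|x|),
  i.e. orthogonal to the position vector x.\<close>
definition HS :: "nat \<Rightarrow> nat \<Rightarrow> nat \<Rightarrow> complex \<Rightarrow> complex" where
  "HS g m1 m2 x = HE g m1 m2 x - (HE g m1 m2 x \<bullet> sgn x) *\<^sub>R sgn x"

text \<open>Unit normal of M_x in the sphere S^{n+1}(|x|) at x.\<close>
definition nuS :: "complex \<Rightarrow> complex" where
  "nuS x = \<i> * sgn x"

text \<open>Squared norm of the spherical shape operator A^S(x) = A^E_{nuS x}.\<close>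
definition AS_normsq :: "nat \<Rightarrow> nat \<Rightarrow> nat \<Rightarrow> complex \<Rightarrow> real" where
  "AS_normsq g m1 m2 x = (\<Sum>k=1..g. real (mult m1 m2 k) * (shapeE g x (nuS x) k)\<^sup>2)"

end

theory Submission
  imports Defs
begin

definition Tk :: "nat \<Rightarrow> complex \<Rightarrow> nat \<Rightarrow> real" where
  "Tk g x k = (Re (alpha g k) * Im x - Im (alpha g k) * Re x) / (Re (alpha g k) * Re x + Im (alpha g k) * Im x)"

lemma Tk2: "Tk g x k = (2*(Re (alpha g k) * Im x - Im (alpha g k) * Re x)) / (2*(Re (alpha g k) * Re x + Im (alpha g k) * Im x))"
  unfolding Tk_def by (rule mult_divide_mult_cancel_left[symmetric]) simp

lemma alpha_eq: "alpha g k = Complex (sin (real k * pi / real g)) (- cos (real k * pi / real g))"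
  unfolding alpha_def by (simp add: complex_eq_iff cos_diff sin_diff)

lemma sum3: fixes d1 d2 d3 :: real shows "d1\<noteq>0 \<Longrightarrow> d2\<noteq>0 \<Longrightarrow> d3\<noteq>0 \<Longrightarrow>
  n1/d1 + n2/d2 + n3/d3 = (n1*d2*d3 + n2*d1*d3 + n3*d1*d2)/(d1*d2*d3)"
  by (simp add: field_simps)
lemma sq3: fixes d1 d2 d3 :: real shows "d1\<noteq>0 \<Longrightarrow> d2\<noteq>0 \<Longrightarrow> d3\<noteq>0 \<Longrightarrow>
  (n1/d1)^2 + (n2/d2)^2 + (n3/d3)^2 = (n1^2*d2^2*d3^2 + n2^2*d1^2*d3^2 + n3^2*d1^2*d2^2)/(d1^2*d2^2*d3^2)"
  by (simp add: field_simps)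
lemma sum2: fixes d1 d2 :: real shows "d1\<noteq>0 \<Longrightarrow> d2\<noteq>0 \<Longrightarrow>
  n1/d1 + n2/d2 = (n1*d2 + n2*d1)/(d1*d2)"
  by (simp add: field_simps)
lemma sq2: fixes d1 d2 :: real shows "d1\<noteq>0 \<Longrightarrow> d2\<noteq>0 \<Longrightarrow>
  (n1/d1)^2 + (n2/d2)^2 = (n1^2*d2^2 + n2^2*d1^2)/(d1^2*d2^2)"
  by (simp add: field_simps)
lemma sq1: fixes d1 :: real shows "(n1/d1)^2 = n1^2/d1^2"
  by (simp add: field_simps)
lemma clr: fixes X D E R :: real assumes "D \<noteq> 0" "X * E = R * D" shows "(X/D)*E = R"
  using assms by (simp add: field_simps)

lemma combine_even:
  fixes Od Ev QO QE s c K M1 M2 N :: real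
  assumes "Od * s = K*(1-c)" "Ev * s = -K*(1+c)" "QO*(1+c) = 2*K^2 - K*(1+c)" "QE*(1-c) = 2*K^2 - K*(1-c)"
   "1+c \<noteq> 0" "1-c \<noteq> 0" "(M1+M2)*K = N" "M1+M2 > 0"
  shows "(M1*Od + M2*Ev) * s = -N*(c + (M2-M1)/(M2+M1))" "M1*QO + M2*QE = 2*K^2*(M1/(1+c) + M2/(1-c)) - N"
proof -
  have "M2+M1 \<noteq> 0" using assms(8) by simp
  then have q0: "(M2+M1)*((M2-M1)/(M2+M1)) = M2-M1" by simp
  have q: "(M1+M2)*((M2-M1)/(M2+M1)) = M2-M1" using q0 by (simp add: add.commute)
  have "(M1*Od + M2*Ev) * s = M1*(Od * s) + M2*(Ev * s)" by (simp add: algebra_simps)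
  also have "\<dots> = M1*(K*(1-c)) + M2*(-K*(1+c))"
    by (simp only: assms(1,2))
  also have "\<dots> = -((M1+M2)*K*c) - K*(M2-M1)"
    by (simp add: algebra_simps)
  also have "\<dots> = -((M1+M2)*K*c) - K*((M1+M2)*((M2-M1)/(M2+M1)))"
    by (simp only: q)
  also have "\<dots> = -N*(c + (M2-M1)/(M2+M1))"
  proof -
    have gen: "\<And>X. -((M1+M2)*K*c) - K*((M1+M2)*X) = -((M1+M2)*K)*(c + X)" by (simp add: algebra_simps)
    show ?thesis unfolding assms(7)[symmetric] by (rule gen)
  qed
  finally show "(M1*Od + M2*Ev) * s = -N*(c + (M2-M1)/(M2+M1))" .
  have QO: "QO = 2*K^2*(1/(1+c)) - K"
    using assms(3,5) by (simp add: field_simps)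
  moreover have QE: "QE = 2*K^2*(1/(1-c)) - K"
    using assms(4,6) by (simp add: field_simps)
  have gen: "\<And>A B. M1*(2*K^2*A - K) + M2*(2*K^2*B - K) = 2*K^2*(M1*A + M2*B) - (M1+M2)*K"
    by (simp add: algebra_simps)
  show "M1*QO + M2*QE = 2*K^2*(M1/(1+c) + M2/(1-c)) - N"
    unfolding assms(7)[symmetric] QO QE gen by simp
qed

lemma combine_odd:
  fixes A Q s c G M N :: real
  assumes "A * s = -G*c" "Q*(1-c^2) = G^2 - G*(1-c^2)" "1+c \<noteq> 0" "1-c \<noteq> 0" "N = G*M"
  shows "(M*A) * s = -N*(c + 0)" "M*Q = G^2/2*(M/(1+c) + M/(1-c)) - N"
proof -
  have "(M*A) * s = M*(A * s)" by simp
  then show "(M*A) * s = -N*(c + 0)" using assms(1,5) by simp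
  have f: "1-c^2 = (1+c)*(1-c)" by (simp add: algebra_simps power2_eq_square)
  have nz: "1-c^2 \<noteq> 0" unfolding f using assms(3,4) by simp
  then have Q: "Q = G^2/(1-c^2) - G" using assms(2) by (simp add: field_simps)
  have e: "M/(1+c) + M/(1-c) = 2*M/(1-c^2)" unfolding f using assms(3,4) by (simp add: field_simps)
  have "M*Q = M*G^2/(1-c^2) - N" unfolding Q assms(5) by (simp add: algebra_simps)
  also have "\<dots> = G^2/2*(M/(1+c) + M/(1-c)) - N" unfolding e by simp
  finally show "M*Q = G^2/2*(M/(1+c) + M/(1-c)) - N" .
qed


lemma alpha_vals:
  "alpha 1 1 = Complex 0 1"
  "alpha 2 1 = Complex 1 0" "alpha 2 2 = Complex 0 1"
  "alpha 3 1 = Complex (sqrt 3/2) (-(1/2))" "alpha 3 2 = Complex (sqrt 3/2) (1/2)" "alpha 3 3 = Complex 0 1"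
  "alpha 4 1 = Complex (sqrt 2/2) (-(sqrt 2/2))" "alpha 4 2 = Complex 1 0"
  "alpha 4 3 = Complex (sqrt 2/2) (sqrt 2/2)" "alpha 4 4 = Complex 0 1"
  "alpha 6 1 = Complex (1/2) (-(sqrt 3/2))" "alpha 6 2 = Complex (sqrt 3/2) (-(1/2))"
  "alpha 6 3 = Complex 1 0" "alpha 6 4 = Complex (sqrt 3/2) (1/2)"
  "alpha 6 5 = Complex (1/2) (sqrt 3/2)" "alpha 6 6 = Complex 0 1"
proof -
  have s: "sin (2*pi/3) = sqrt 3/2" "cos (2*pi/3) = -1/2" "sin (5*pi/6) = 1/2" "cos (5*pi/6) = -(sqrt 3/2)"
     "sin (3*pi/4) = sqrt 2/2" "cos (3*pi/4) = -(sqrt 2/2)"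
    using sin_pi_minus[of "pi/3"] cos_pi_minus[of "pi/3"] sin_pi_minus[of "pi/6"] cos_pi_minus[of "pi/6"]
      sin_pi_minus[of "pi/4"] cos_pi_minus[of "pi/4"]
    by (simp_all add: sin_60 cos_60 sin_30 cos_30 sin_45 cos_45 field_simps)
  have s2: "sin (4*pi/6) = sqrt 3/2" "cos (4*pi/6) = -1/2" "sin (2*pi/6) = sqrt 3/2" "cos (2*pi/6) = 1/2"
    "sin (3*pi/6) = 1" "cos (3*pi/6) = 0" "sin (2*pi/4) = 1" "cos (2*pi/4) = 0"
    using s sin_60 cos_60 by (simp_all add: field_simps)
  show "alpha 1 1 = Complex 0 1" unfolding alpha_eq by simp
  show "alpha 2 1 = Complex 1 0" "alpha 2 2 = Complex 0 1" unfolding alpha_eq by simp_all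
  show "alpha 3 1 = Complex (sqrt 3/2) (-(1/2))" "alpha 3 2 = Complex (sqrt 3/2) (1/2)" "alpha 3 3 = Complex 0 1"
    unfolding alpha_eq using s by (simp_all add: sin_60 cos_60)
  show "alpha 4 1 = Complex (sqrt 2/2) (-(sqrt 2/2))" "alpha 4 2 = Complex 1 0"
    "alpha 4 3 = Complex (sqrt 2/2) (sqrt 2/2)" "alpha 4 4 = Complex 0 1"
    unfolding alpha_eq using s s2 by (simp_all add: sin_45 cos_45)
  show "alpha 6 1 = Complex (1/2) (-(sqrt 3/2))" "alpha 6 2 = Complex (sqrt 3/2) (-(1/2))"
    "alpha 6 3 = Complex 1 0" "alpha 6 4 = Complex (sqrt 3/2) (1/2)"
    "alpha 6 5 = Complex (1/2) (sqrt 3/2)" "alpha 6 6 = Complex 0 1"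
    unfolding alpha_eq using s s2 by (simp_all add: sin_30 cos_30)
qed

lemma T_vals:
  fixes a b :: real defines "r \<equiv> sqrt 3" and "w \<equiv> sqrt 2"
  shows "Tk 1 (Complex a b) 1 = -a/b"
  "Tk 2 (Complex a b) 1 = b/a" "Tk 2 (Complex a b) 2 = -a/b"
  "Tk 3 (Complex a b) 1 = (r*b + a)/(r*a - b)" "Tk 3 (Complex a b) 2 = (r*b - a)/(r*a + b)" "Tk 3 (Complex a b) 3 = -a/b"
  "Tk 4 (Complex a b) 1 = (w*b + w*a)/(w*a - w*b)" "Tk 4 (Complex a b) 2 = b/a"
  "Tk 4 (Complex a b) 3 = (w*b - w*a)/(w*a + w*b)" "Tk 4 (Complex a b) 4 = -a/b"
  "Tk 6 (Complex a b) 1 = (b + r*a)/(a - r*b)" "Tk 6 (Complex a b) 2 = (r*b + a)/(r*a - b)"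
   "Tk 6 (Complex a b) 3 = b/a" "Tk 6 (Complex a b) 4 = (r*b - a)/(r*a + b)"
   "Tk 6 (Complex a b) 5 = (b - r*a)/(a + r*b)" "Tk 6 (Complex a b) 6 = -a/b"
  unfolding Tk2 alpha_vals r_def w_def by (simp_all add: algebra_simps)

lemma D_vals:
  fixes a b :: real
  shows "Complex a b \<bullet> alpha 1 1 = b"
  "Complex a b \<bullet> alpha 2 1 = a" "Complex a b \<bullet> alpha 2 2 = b"
  "Complex a b \<bullet> alpha 3 1 = (sqrt 3*a - b)/2" "Complex a b \<bullet> alpha 3 2 = (sqrt 3*a + b)/2" "Complex a b \<bullet> alpha 3 3 = b"
  "Complex a b \<bullet> alpha 4 1 = (sqrt 2*a - sqrt 2*b)/2" "Complex a b \<bullet> alpha 4 2 = a"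
  "Complex a b \<bullet> alpha 4 3 = (sqrt 2*a + sqrt 2*b)/2" "Complex a b \<bullet> alpha 4 4 = b"
  "Complex a b \<bullet> alpha 6 1 = (a - sqrt 3*b)/2" "Complex a b \<bullet> alpha 6 2 = (sqrt 3*a - b)/2"
  "Complex a b \<bullet> alpha 6 3 = a" "Complex a b \<bullet> alpha 6 4 = (sqrt 3*a + b)/2"
  "Complex a b \<bullet> alpha 6 5 = (a + sqrt 3*b)/2" "Complex a b \<bullet> alpha 6 6 = b"
  unfolding alpha_vals inner_complex_def by (simp_all add: field_simps)

lemma pow_vals:
  fixes a b :: real
  shows "Complex a b ^ 1 = Complex a b"
   "Complex a b ^ 2 = Complex (a^2 - b^2) (2*a*b)"
   "Complex a b ^ 3 = Complex (a^3 - 3*a*b^2) (3*a^2*b - b^3)"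
   "Complex a b ^ 4 = Complex (a^4 - 6*a^2*b^2 + b^4) (4*a^3*b - 4*a*b^3)"
   "Complex a b ^ 6 = Complex (a^6 - 15*a^4*b^2 + 15*a^2*b^4 - b^6) (6*a^5*b - 20*a^3*b^3 + 6*a*b^5)"
  by (simp_all add: Complex_eq power2_eq_square eval_nat_numeral algebra_simps complex_eq_iff)

lemma id1:
  fixes a b :: real
  assumes h: "a^2+b^2=1"
    and nz: "b \<noteq> 0"
  defines "c \<equiv> a" and "s \<equiv> b"
  shows "(((-a))/b) * s = -(c)" "((((-a))/b)^2) * (1-c^2) = 1 - (1-c^2)"
proof -
  show "(((-a))/b) * s = -(c)"
    by (rule clr, (use nz in simp), unfold c_def s_def, ((simp add: algebra_simps; fail) | use h in algebra))
  show "((((-a))/b)^2) * (1-c^2) = 1 - (1-c^2)"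
    by (subst sq1, rule clr, (use nz in simp), unfold c_def s_def, ((simp add: algebra_simps; fail) | use h in algebra))
qed

lemma id2:
  fixes a b :: real
  assumes h: "a^2+b^2=1"
    and nz: "a \<noteq> 0" "b \<noteq> 0"
  defines "c \<equiv> (a^2 - b^2)" and "s \<equiv> (2*a*b)"
  shows "((b)/a) * s = (1-c)" "(((-a))/b) * s = -((1+c))" "(((b)/a)^2) * (1+c) = 2 - (1+c)" "((((-a))/b)^2) * (1-c) = 2 - (1-c)"
proof -
  show "((b)/a) * s = (1-c)"
    by (rule clr, (use nz in simp), unfold c_def s_def, ((simp add: algebra_simps; fail) | use h in algebra))
  show "(((-a))/b) * s = -((1+c))"
    by (rule clr, (use nz in simp), unfold c_def s_def, ((simp add: algebra_simps; fail) | use h in algebra))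
  show "(((b)/a)^2) * (1+c) = 2 - (1+c)"
    by (subst sq1, rule clr, (use nz in simp), unfold c_def s_def, ((simp add: algebra_simps; fail) | use h in algebra))
  show "((((-a))/b)^2) * (1-c) = 2 - (1-c)"
    by (subst sq1, rule clr, (use nz in simp), unfold c_def s_def, ((simp add: algebra_simps; fail) | use h in algebra))
qed

lemma id3:
  fixes a b r :: real
  assumes h: "a^2+b^2=1" "r^2 = 3"
    and nz: "(r*a - b) \<noteq> 0" "(r*a + b) \<noteq> 0" "b \<noteq> 0"
  defines "c \<equiv> (a^3 - 3*a*b^2)" and "s \<equiv> (3*a^2*b - b^3)"
  shows "(((r*b + a))/(r*a - b) + ((r*b - a))/(r*a + b) + ((-a))/b) * s = -(3*c)" "((((r*b + a))/(r*a - b))^2 + (((r*b - a))/(r*a + b))^2 + (((-a))/b)^2) * (1-c^2) = 9 - 3*(1-c^2)"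
proof -
  show "(((r*b + a))/(r*a - b) + ((r*b - a))/(r*a + b) + ((-a))/b) * s = -(3*c)"
    by (subst sum3, (use nz in auto)[3], rule clr, (use nz in simp), unfold c_def s_def, ((simp add: algebra_simps; fail) | use h in algebra))
  show "((((r*b + a))/(r*a - b))^2 + (((r*b - a))/(r*a + b))^2 + (((-a))/b)^2) * (1-c^2) = 9 - 3*(1-c^2)"
    by (subst sq3, (use nz in auto)[3], rule clr, (use nz in simp), unfold c_def s_def, ((simp add: algebra_simps; fail) | use h in algebra))
qed

lemma id4:
  fixes a b w :: real
  assumes h: "a^2+b^2=1" "w^2 = 2"
    and nz: "(w*a - w*b) \<noteq> 0" "a \<noteq> 0" "(w*a + w*b) \<noteq> 0" "b \<noteq> 0"
  defines "c \<equiv> (a^4 - 6*a^2*b^2 + b^4)" and "s \<equiv> (4*a^3*b - 4*a*b^3)"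
  shows "(((w*b + w*a))/(w*a - w*b) + ((w*b - w*a))/(w*a + w*b)) * s = 2*(1-c)" "((b)/a + ((-a))/b) * s = -(2*(1+c))" "((((w*b + w*a))/(w*a - w*b))^2 + (((w*b - w*a))/(w*a + w*b))^2) * (1+c) = 8 - 2*(1+c)" "(((b)/a)^2 + (((-a))/b)^2) * (1-c) = 8 - 2*(1-c)"
proof -
  show "(((w*b + w*a))/(w*a - w*b) + ((w*b - w*a))/(w*a + w*b)) * s = 2*(1-c)"
    by (subst sum2, (use nz in auto)[2], rule clr, (use nz in simp), unfold c_def s_def, ((simp add: algebra_simps; fail) | use h in algebra))
  show "((b)/a + ((-a))/b) * s = -(2*(1+c))"
    by (subst sum2, (use nz in auto)[2], rule clr, (use nz in simp), unfold c_def s_def, ((simp add: algebra_simps; fail) | use h in algebra))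
  show "((((w*b + w*a))/(w*a - w*b))^2 + (((w*b - w*a))/(w*a + w*b))^2) * (1+c) = 8 - 2*(1+c)"
    by (subst sq2, (use nz in auto)[2], rule clr, (use nz in simp), unfold c_def s_def, ((simp add: algebra_simps; fail) | use h in algebra))
  show "(((b)/a)^2 + (((-a))/b)^2) * (1-c) = 8 - 2*(1-c)"
    by (subst sq2, (use nz in auto)[2], rule clr, (use nz in simp), unfold c_def s_def, ((simp add: algebra_simps; fail) | use h in algebra))
qed

lemma id6:
  fixes a b r :: real
  assumes h: "a^2+b^2=1" "r^2 = 3"
    and nz: "(a - r*b) \<noteq> 0" "(r*a - b) \<noteq> 0" "a \<noteq> 0" "(r*a + b) \<noteq> 0" "(a + r*b) \<noteq> 0" "b \<noteq> 0"
  defines "c \<equiv> (a^6 - 15*a^4*b^2 + 15*a^2*b^4 - b^6)" and "s \<equiv> (6*a^5*b - 20*a^3*b^3 + 6*a*b^5)"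
  shows "(((b + r*a))/(a - r*b) + (b)/a + ((b - r*a))/(a + r*b)) * s = 3*(1-c)" "(((r*b + a))/(r*a - b) + ((r*b - a))/(r*a + b) + ((-a))/b) * s = -(3*(1+c))" "((((b + r*a))/(a - r*b))^2 + ((b)/a)^2 + (((b - r*a))/(a + r*b))^2) * (1+c) = 18 - 3*(1+c)" "((((r*b + a))/(r*a - b))^2 + (((r*b - a))/(r*a + b))^2 + (((-a))/b)^2) * (1-c) = 18 - 3*(1-c)"
proof -
  show "(((b + r*a))/(a - r*b) + (b)/a + ((b - r*a))/(a + r*b)) * s = 3*(1-c)"
    by (subst sum3, (use nz in auto)[3], rule clr, (use nz in simp), unfold c_def s_def, ((simp add: algebra_simps; fail) | use h in algebra))
  show "(((r*b + a))/(r*a - b) + ((r*b - a))/(r*a + b) + ((-a))/b) * s = -(3*(1+c))"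
    by (subst sum3, (use nz in auto)[3], rule clr, (use nz in simp), unfold c_def s_def, ((simp add: algebra_simps; fail) | use h in algebra))
  show "((((b + r*a))/(a - r*b))^2 + ((b)/a)^2 + (((b - r*a))/(a + r*b))^2) * (1+c) = 18 - 3*(1+c)"
    by (subst sq3, (use nz in auto)[3], rule clr, (use nz in simp), unfold c_def s_def, ((simp add: algebra_simps; fail) | use h in algebra))
  show "((((r*b + a))/(r*a - b))^2 + (((r*b - a))/(r*a + b))^2 + (((-a))/b)^2) * (1-c) = 18 - 3*(1-c)"
    by (subst sq3, (use nz in auto)[3], rule clr, (use nz in simp), unfold c_def s_def, ((simp add: algebra_simps; fail) | use h in algebra))
qed
lemma pt1:
  fixes a b :: real and m1 m2 n :: nat
  assumes nrm: "a^2+b^2=1" and pos: "\<And>k. 1 \<le> k \<Longrightarrow> k \<le> 1 \<Longrightarrow> Complex a b \<bullet> alpha 1 k > 0"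
    and cs: "1 + Re(Complex a b ^ 1) \<noteq> 0" "1 - Re(Complex a b ^ 1) \<noteq> 0" and adm: "iso_admissible 1 m1 m2 n"
  shows "(\<Sum>k=1..1. real (mult m1 m2 k) * Tk 1 (Complex a b) k) * Im (Complex a b ^ 1) = -(real n)*(Re (Complex a b ^ 1) + delta 1 m1 m2)"
   "(\<Sum>k=1..1. real (mult m1 m2 k) * (Tk 1 (Complex a b) k)^2) = (real 1)^2/2*(real m1/(1+Re(Complex a b ^ 1)) + real m2/(1 - Re(Complex a b ^ 1))) - real n"
proof -
  have m21: "m2 = m1" using adm unfolding iso_admissible_def by simp
  have nz1: "b \<noteq> 0" using pos[of 1, unfolded D_vals] by (simp add: )
  have st: "{1..1::nat} = {1}" by auto
  have S: "(\<Sum>k=1..1. real (mult m1 m2 k) * Tk 1 (Complex a b) k) = real m1*(((-a))/b)"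
    unfolding st by (simp add: mult_def T_vals T_vals[unfolded One_nat_def]  m21 algebra_simps)
  have Q: "(\<Sum>k=1..1. real (mult m1 m2 k) * (Tk 1 (Complex a b) k)^2) = real m1*((((-a))/b)^2)"
    unfolding st by (simp add: mult_def T_vals T_vals[unfolded One_nat_def]  m21 algebra_simps)
  have gn: "n = 1*m1" using adm m21 unfolding iso_admissible_def by simp
  have g: "real n = 1*real m1" "m2 = m1"
    using m21 by (simp_all add: gn)
  have i1: "(((-a))/b) * b = -1*a"
   and i2: "((((-a))/b)^2)*(1-a^2) = 1^2 - 1*(1-a^2)"
    using id1[OF nrm nz1] by simp_all
  note cb = combine_odd[OF i1 i2 cs[unfolded pow_vals complex.sel] g(1)]
  show "(\<Sum>k=1..1. real (mult m1 m2 k) * Tk 1 (Complex a b) k) * Im (Complex a b ^ 1) = -(real n)*(Re (Complex a b ^ 1) + delta 1 m1 m2)"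
    unfolding S pow_vals complex.sel using cb(1) g(2) by (simp add: delta_def)
  show "(\<Sum>k=1..1. real (mult m1 m2 k) * (Tk 1 (Complex a b) k)^2) = (real 1)^2/2*(real m1/(1+Re(Complex a b ^ 1)) + real m2/(1 - Re(Complex a b ^ 1))) - real n"
    unfolding Q pow_vals complex.sel using cb(2) g(2) by simp
qed

lemma pt2:
  fixes a b :: real and m1 m2 n :: nat
  assumes nrm: "a^2+b^2=1" and pos: "\<And>k. 1 \<le> k \<Longrightarrow> k \<le> 2 \<Longrightarrow> Complex a b \<bullet> alpha 2 k > 0"
    and cs: "1 + Re(Complex a b ^ 2) \<noteq> 0" "1 - Re(Complex a b ^ 2) \<noteq> 0" and adm: "iso_admissible 2 m1 m2 n"
  shows "(\<Sum>k=1..2. real (mult m1 m2 k) * Tk 2 (Complex a b) k) * Im (Complex a b ^ 2) = -(real n)*(Re (Complex a b ^ 2) + delta 2 m1 m2)"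
   "(\<Sum>k=1..2. real (mult m1 m2 k) * (Tk 2 (Complex a b) k)^2) = (real 2)^2/2*(real m1/(1+Re(Complex a b ^ 2)) + real m2/(1 - Re(Complex a b ^ 2))) - real n"
proof -
  have nz1: "a \<noteq> 0" using pos[of 1, unfolded D_vals] by (simp add: )
  have nz2: "b \<noteq> 0" using pos[of 2, unfolded D_vals] by (simp add: )
  have st: "{1..2::nat} = {1,2}" by auto
  have S: "(\<Sum>k=1..2. real (mult m1 m2 k) * Tk 2 (Complex a b) k) = real m1*((b)/a) + real m2*(((-a))/b)"
    unfolding st by (simp add: mult_def T_vals T_vals[unfolded One_nat_def]   algebra_simps)
  have Q: "(\<Sum>k=1..2. real (mult m1 m2 k) * (Tk 2 (Complex a b) k)^2) = real m1*(((b)/a)^2) + real m2*((((-a))/b)^2)"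
    unfolding st by (simp add: mult_def T_vals T_vals[unfolded One_nat_def]   algebra_simps)
  have gn: "(m1+m2)*1 = n" "1 \<le> m1" using adm unfolding iso_admissible_def by simp_all
  have g: "(real m1 + real m2)*1 = real n" "real m1 + real m2 > 0"
    using gn by (simp_all add: gn(1)[symmetric])
  have i1: "((b)/a) * (2*a*b) = 1*(1-(a^2 - b^2))"
   and i2: "(((-a))/b) * (2*a*b) = -1*(1+(a^2 - b^2))"
   and i3: "(((b)/a)^2)*(1+(a^2 - b^2)) = 2*1^2 - 1*(1+(a^2 - b^2))"
   and i4: "((((-a))/b)^2)*(1-(a^2 - b^2)) = 2*1^2 - 1*(1-(a^2 - b^2))"
    using id2[OF nrm nz1 nz2] by simp_all
  note cb = combine_even[OF i1 i2 i3 i4 cs[unfolded pow_vals complex.sel] g]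
  show "(\<Sum>k=1..2. real (mult m1 m2 k) * Tk 2 (Complex a b) k) * Im (Complex a b ^ 2) = -(real n)*(Re (Complex a b ^ 2) + delta 2 m1 m2)"
    unfolding S pow_vals complex.sel using cb(1) by (simp add: delta_def)
  show "(\<Sum>k=1..2. real (mult m1 m2 k) * (Tk 2 (Complex a b) k)^2) = (real 2)^2/2*(real m1/(1+Re(Complex a b ^ 2)) + real m2/(1 - Re(Complex a b ^ 2))) - real n"
    unfolding Q pow_vals complex.sel using cb(2) by simp
qed

lemma pt3:
  fixes a b :: real and m1 m2 n :: nat
  assumes nrm: "a^2+b^2=1" and pos: "\<And>k. 1 \<le> k \<Longrightarrow> k \<le> 3 \<Longrightarrow> Complex a b \<bullet> alpha 3 k > 0"
    and cs: "1 + Re(Complex a b ^ 3) \<noteq> 0" "1 - Re(Complex a b ^ 3) \<noteq> 0" and adm: "iso_admissible 3 m1 m2 n"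
  shows "(\<Sum>k=1..3. real (mult m1 m2 k) * Tk 3 (Complex a b) k) * Im (Complex a b ^ 3) = -(real n)*(Re (Complex a b ^ 3) + delta 3 m1 m2)"
   "(\<Sum>k=1..3. real (mult m1 m2 k) * (Tk 3 (Complex a b) k)^2) = (real 3)^2/2*(real m1/(1+Re(Complex a b ^ 3)) + real m2/(1 - Re(Complex a b ^ 3))) - real n"
proof -
  define r where "r = sqrt 3"
  have v2: "r^2 = 3" by (simp add: r_def)
  have m21: "m2 = m1" using adm unfolding iso_admissible_def by simp
  have nz1: "(r*a - b) \<noteq> 0" using pos[of 1, unfolded D_vals] by (simp add: r_def)
  have nz2: "(r*a + b) \<noteq> 0" using pos[of 2, unfolded D_vals] by (simp add: r_def)
  have nz3: "b \<noteq> 0" using pos[of 3, unfolded D_vals] by (simp add: r_def)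
  have st: "{1..3::nat} = {1,2,3}" by auto
  have S: "(\<Sum>k=1..3. real (mult m1 m2 k) * Tk 3 (Complex a b) k) = real m1*(((r*b + a))/(r*a - b) + ((r*b - a))/(r*a + b) + ((-a))/b)"
    unfolding st by (simp add: mult_def T_vals T_vals[unfolded One_nat_def] r_def m21 algebra_simps)
  have Q: "(\<Sum>k=1..3. real (mult m1 m2 k) * (Tk 3 (Complex a b) k)^2) = real m1*((((r*b + a))/(r*a - b))^2 + (((r*b - a))/(r*a + b))^2 + (((-a))/b)^2)"
    unfolding st by (simp add: mult_def T_vals T_vals[unfolded One_nat_def] r_def m21 algebra_simps)
  have gn: "n = 3*m1" using adm m21 unfolding iso_admissible_def by simp
  have g: "real n = 3*real m1" "m2 = m1"
    using m21 by (simp_all add: gn)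
  have i1: "(((r*b + a))/(r*a - b) + ((r*b - a))/(r*a + b) + ((-a))/b) * (3*a^2*b - b^3) = -3*(a^3 - 3*a*b^2)"
   and i2: "((((r*b + a))/(r*a - b))^2 + (((r*b - a))/(r*a + b))^2 + (((-a))/b)^2)*(1-(a^3 - 3*a*b^2)^2) = 3^2 - 3*(1-(a^3 - 3*a*b^2)^2)"
    using id3[OF nrm v2 nz1 nz2 nz3] by simp_all
  note cb = combine_odd[OF i1 i2 cs[unfolded pow_vals complex.sel] g(1)]
  show "(\<Sum>k=1..3. real (mult m1 m2 k) * Tk 3 (Complex a b) k) * Im (Complex a b ^ 3) = -(real n)*(Re (Complex a b ^ 3) + delta 3 m1 m2)"
    unfolding S pow_vals complex.sel using cb(1) g(2) by (simp add: delta_def)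
  show "(\<Sum>k=1..3. real (mult m1 m2 k) * (Tk 3 (Complex a b) k)^2) = (real 3)^2/2*(real m1/(1+Re(Complex a b ^ 3)) + real m2/(1 - Re(Complex a b ^ 3))) - real n"
    unfolding Q pow_vals complex.sel using cb(2) g(2) by simp
qed

lemma pt4:
  fixes a b :: real and m1 m2 n :: nat
  assumes nrm: "a^2+b^2=1" and pos: "\<And>k. 1 \<le> k \<Longrightarrow> k \<le> 4 \<Longrightarrow> Complex a b \<bullet> alpha 4 k > 0"
    and cs: "1 + Re(Complex a b ^ 4) \<noteq> 0" "1 - Re(Complex a b ^ 4) \<noteq> 0" and adm: "iso_admissible 4 m1 m2 n"
  shows "(\<Sum>k=1..4. real (mult m1 m2 k) * Tk 4 (Complex a b) k) * Im (Complex a b ^ 4) = -(real n)*(Re (Complex a b ^ 4) + delta 4 m1 m2)"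
   "(\<Sum>k=1..4. real (mult m1 m2 k) * (Tk 4 (Complex a b) k)^2) = (real 4)^2/2*(real m1/(1+Re(Complex a b ^ 4)) + real m2/(1 - Re(Complex a b ^ 4))) - real n"
proof -
  define w where "w = sqrt 2"
  have v2: "w^2 = 2" by (simp add: w_def)
  have nz1: "(w*a - w*b) \<noteq> 0" using pos[of 1, unfolded D_vals] by (simp add: w_def)
  have nz2: "a \<noteq> 0" using pos[of 2, unfolded D_vals] by (simp add: w_def)
  have nz3: "(w*a + w*b) \<noteq> 0" using pos[of 3, unfolded D_vals] by (simp add: w_def)
  have nz4: "b \<noteq> 0" using pos[of 4, unfolded D_vals] by (simp add: w_def)
  have st: "{1..4::nat} = {1,2,3,4}" by auto
  have S: "(\<Sum>k=1..4. real (mult m1 m2 k) * Tk 4 (Complex a b) k) = real m1*(((w*b + w*a))/(w*a - w*b) + ((w*b - w*a))/(w*a + w*b)) + real m2*((b)/a + ((-a))/b)"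
    unfolding st by (simp add: mult_def T_vals T_vals[unfolded One_nat_def] w_def  algebra_simps)
  have Q: "(\<Sum>k=1..4. real (mult m1 m2 k) * (Tk 4 (Complex a b) k)^2) = real m1*((((w*b + w*a))/(w*a - w*b))^2 + (((w*b - w*a))/(w*a + w*b))^2) + real m2*(((b)/a)^2 + (((-a))/b)^2)"
    unfolding st by (simp add: mult_def T_vals T_vals[unfolded One_nat_def] w_def  algebra_simps)
  have gn: "(m1+m2)*2 = n" "1 \<le> m1" using adm unfolding iso_admissible_def by simp_all
  have g: "(real m1 + real m2)*2 = real n" "real m1 + real m2 > 0"
    using gn by (simp_all add: gn(1)[symmetric])
  have i1: "(((w*b + w*a))/(w*a - w*b) + ((w*b - w*a))/(w*a + w*b)) * (4*a^3*b - 4*a*b^3) = 2*(1-(a^4 - 6*a^2*b^2 + b^4))"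
   and i2: "((b)/a + ((-a))/b) * (4*a^3*b - 4*a*b^3) = -2*(1+(a^4 - 6*a^2*b^2 + b^4))"
   and i3: "((((w*b + w*a))/(w*a - w*b))^2 + (((w*b - w*a))/(w*a + w*b))^2)*(1+(a^4 - 6*a^2*b^2 + b^4)) = 2*2^2 - 2*(1+(a^4 - 6*a^2*b^2 + b^4))"
   and i4: "(((b)/a)^2 + (((-a))/b)^2)*(1-(a^4 - 6*a^2*b^2 + b^4)) = 2*2^2 - 2*(1-(a^4 - 6*a^2*b^2 + b^4))"
    using id4[OF nrm v2 nz1 nz2 nz3 nz4] by simp_all
  note cb = combine_even[OF i1 i2 i3 i4 cs[unfolded pow_vals complex.sel] g]
  show "(\<Sum>k=1..4. real (mult m1 m2 k) * Tk 4 (Complex a b) k) * Im (Complex a b ^ 4) = -(real n)*(Re (Complex a b ^ 4) + delta 4 m1 m2)"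
    unfolding S pow_vals complex.sel using cb(1) by (simp add: delta_def)
  show "(\<Sum>k=1..4. real (mult m1 m2 k) * (Tk 4 (Complex a b) k)^2) = (real 4)^2/2*(real m1/(1+Re(Complex a b ^ 4)) + real m2/(1 - Re(Complex a b ^ 4))) - real n"
    unfolding Q pow_vals complex.sel using cb(2) by simp
qed

lemma pt6:
  fixes a b :: real and m1 m2 n :: nat
  assumes nrm: "a^2+b^2=1" and pos: "\<And>k. 1 \<le> k \<Longrightarrow> k \<le> 6 \<Longrightarrow> Complex a b \<bullet> alpha 6 k > 0"
    and cs: "1 + Re(Complex a b ^ 6) \<noteq> 0" "1 - Re(Complex a b ^ 6) \<noteq> 0" and adm: "iso_admissible 6 m1 m2 n"
  shows "(\<Sum>k=1..6. real (mult m1 m2 k) * Tk 6 (Complex a b) k) * Im (Complex a b ^ 6) = -(real n)*(Re (Complex a b ^ 6) + delta 6 m1 m2)"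
   "(\<Sum>k=1..6. real (mult m1 m2 k) * (Tk 6 (Complex a b) k)^2) = (real 6)^2/2*(real m1/(1+Re(Complex a b ^ 6)) + real m2/(1 - Re(Complex a b ^ 6))) - real n"
proof -
  define r where "r = sqrt 3"
  have v2: "r^2 = 3" by (simp add: r_def)
  have nz1: "(a - r*b) \<noteq> 0" using pos[of 1, unfolded D_vals] by (simp add: r_def)
  have nz2: "(r*a - b) \<noteq> 0" using pos[of 2, unfolded D_vals] by (simp add: r_def)
  have nz3: "a \<noteq> 0" using pos[of 3, unfolded D_vals] by (simp add: r_def)
  have nz4: "(r*a + b) \<noteq> 0" using pos[of 4, unfolded D_vals] by (simp add: r_def)
  have nz5: "(a + r*b) \<noteq> 0" using pos[of 5, unfolded D_vals] by (simp add: r_def)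
  have nz6: "b \<noteq> 0" using pos[of 6, unfolded D_vals] by (simp add: r_def)
  have st: "{1..6::nat} = {1,2,3,4,5,6}" by auto
  have S: "(\<Sum>k=1..6. real (mult m1 m2 k) * Tk 6 (Complex a b) k) = real m1*(((b + r*a))/(a - r*b) + (b)/a + ((b - r*a))/(a + r*b)) + real m2*(((r*b + a))/(r*a - b) + ((r*b - a))/(r*a + b) + ((-a))/b)"
    unfolding st by (simp add: mult_def T_vals T_vals[unfolded One_nat_def] r_def  algebra_simps)
  have Q: "(\<Sum>k=1..6. real (mult m1 m2 k) * (Tk 6 (Complex a b) k)^2) = real m1*((((b + r*a))/(a - r*b))^2 + ((b)/a)^2 + (((b - r*a))/(a + r*b))^2) + real m2*((((r*b + a))/(r*a - b))^2 + (((r*b - a))/(r*a + b))^2 + (((-a))/b)^2)"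
    unfolding st by (simp add: mult_def T_vals T_vals[unfolded One_nat_def] r_def  algebra_simps)
  have gn: "(m1+m2)*3 = n" "1 \<le> m1" using adm unfolding iso_admissible_def by simp_all
  have g: "(real m1 + real m2)*3 = real n" "real m1 + real m2 > 0"
    using gn by (simp_all add: gn(1)[symmetric])
  have i1: "(((b + r*a))/(a - r*b) + (b)/a + ((b - r*a))/(a + r*b)) * (6*a^5*b - 20*a^3*b^3 + 6*a*b^5) = 3*(1-(a^6 - 15*a^4*b^2 + 15*a^2*b^4 - b^6))"
   and i2: "(((r*b + a))/(r*a - b) + ((r*b - a))/(r*a + b) + ((-a))/b) * (6*a^5*b - 20*a^3*b^3 + 6*a*b^5) = -3*(1+(a^6 - 15*a^4*b^2 + 15*a^2*b^4 - b^6))"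
   and i3: "((((b + r*a))/(a - r*b))^2 + ((b)/a)^2 + (((b - r*a))/(a + r*b))^2)*(1+(a^6 - 15*a^4*b^2 + 15*a^2*b^4 - b^6)) = 2*3^2 - 3*(1+(a^6 - 15*a^4*b^2 + 15*a^2*b^4 - b^6))"
   and i4: "((((r*b + a))/(r*a - b))^2 + (((r*b - a))/(r*a + b))^2 + (((-a))/b)^2)*(1-(a^6 - 15*a^4*b^2 + 15*a^2*b^4 - b^6)) = 2*3^2 - 3*(1-(a^6 - 15*a^4*b^2 + 15*a^2*b^4 - b^6))"
    using id6[OF nrm v2 nz1 nz2 nz3 nz4 nz5 nz6] by simp_all
  note cb = combine_even[OF i1 i2 i3 i4 cs[unfolded pow_vals complex.sel] g]
  show "(\<Sum>k=1..6. real (mult m1 m2 k) * Tk 6 (Complex a b) k) * Im (Complex a b ^ 6) = -(real n)*(Re (Complex a b ^ 6) + delta 6 m1 m2)"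
    unfolding S pow_vals complex.sel using cb(1) by (simp add: delta_def)
  show "(\<Sum>k=1..6. real (mult m1 m2 k) * (Tk 6 (Complex a b) k)^2) = (real 6)^2/2*(real m1/(1+Re(Complex a b ^ 6)) + real m2/(1 - Re(Complex a b ^ 6))) - real n"
    unfolding Q pow_vals complex.sel using cb(2) by simp
qed

lemma sgn_norm1: "norm (x::complex) = 1 \<Longrightarrow> sgn x = x"
  by (simp add: sgn_div_norm)

lemma L_shape: assumes "norm x = 1" shows "shapeE g x (nuS x) k = Tk g x k"
  unfolding shapeE_def nuS_def Tk_def sgn_norm1[OF assms] inner_complex_def
  by (simp add: field_simps) (simp add: diff_divide_distrib)

lemma aux_inner: "(- a / complex_of_real d) \<bullet> (\<i>*x) = (Re a * Im x - Im a * Re x)/d"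
  unfolding inner_complex_def by (simp add: field_simps) (simp add: diff_divide_distrib)

lemma L_HE: "HE g m1 m2 x \<bullet> (\<i>*x) = (\<Sum>k=1..g. real (mult m1 m2 k) * Tk g x k)"
  unfolding HE_def inner_sum_left
proof (rule sum.cong[OF refl])
  fix k
  have "(of_nat (mult m1 m2 k) * (- alpha g k / complex_of_real (x \<bullet> alpha g k))) \<bullet> (\<i> * x)
     = real (mult m1 m2 k) * ((- alpha g k / complex_of_real (x \<bullet> alpha g k)) \<bullet> (\<i> * x))"
    by (metis inner_scaleR_left of_real_of_nat_eq scaleR_conv_of_real)
  also have "\<dots> = real (mult m1 m2 k) * Tk g x k"
    unfolding aux_inner Tk_def by (simp add: inner_complex_def algebra_simps)
  finally show "(of_nat (mult m1 m2 k) * (- alpha g k / complex_of_real (x \<bullet> alpha g k))) \<bullet> (\<i> * x) =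
        real (mult m1 m2 k) * Tk g x k" .
qed

lemma L_HS: assumes "norm x = 1" shows "HS g m1 m2 x = (HE g m1 m2 x \<bullet> (\<i>*x)) *\<^sub>R (\<i>*x)"
proof -
  have n: "(Re x)^2 + (Im x)^2 = 1" using assms cmod_power2[of x] by simp
  show ?thesis unfolding HS_def sgn_norm1[OF assms]
    by (simp add: complex_eq_iff inner_complex_def algebra_simps power2_eq_square)
       (use n in \<open>simp add: power2_eq_square algebra_simps\<close>; algebra)
qed

lemma AS_eq: assumes "norm x = 1" shows "AS_normsq g m1 m2 x = (\<Sum>k=1..g. real (mult m1 m2 k) * (Tk g x k)^2)"
  unfolding AS_normsq_def L_shape[OF assms] ..


lemma inner_alpha_pos:
  assumes "0 < \<theta>" "\<theta> < pi / real g" "1 \<le> k" "k \<le> g"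
  shows "cis \<theta> \<bullet> alpha g k > 0"
proof -
  have gp: "real g > 0" using assms(3,4) by simp
  have e: "cis \<theta> \<bullet> alpha g k = cos (\<theta> - (real k * pi / real g - pi / 2))"
    unfolding alpha_def inner_complex_def by (simp add: cos_diff)
  have "pi / real g * 1 \<le> pi / real g * real k" using assms(3) gp by (intro mult_left_mono) auto
  then have k1: "pi / real g \<le> real k * pi / real g" using gp by (simp add: field_simps)
  have "real k * pi / real g \<le> real g * pi / real g" using assms(4) gp
    by (intro divide_right_mono mult_right_mono) auto
  then have k2: "real k * pi / real g \<le> pi" using gp by simp
  have t1: "\<theta> < real k * pi / real g" using k1 assms(2) by linarith
  show ?thesis unfolding e
  proof (rule cos_gt_zero_pi)
    show "- (pi / 2) < \<theta> - (real k * pi / real g - pi / 2)" using k2 assms(1) by linarith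
    show "\<theta> - (real k * pi / real g - pi / 2) < pi / 2" using t1 by linarith
  qed
qed

lemma Im_pow_pos:
  assumes "0 < \<theta>" "\<theta> < pi / real g" "1 \<le> g"
  shows "Im (cis \<theta> ^ g) > 0"
proof -
  have gp: "real g > 0" using assms(3) by simp
  have "real g * \<theta> < pi" using assms(2) gp by (simp add: pos_less_divide_eq mult.commute)
  then show ?thesis unfolding Complex.DeMoivre using assms(1) gp by (simp add: sin_gt_zero)
qed

lemma point:
  fixes m1 m2 n g :: nat
  assumes adm: "iso_admissible g m1 m2 n" and th: "0 < \<theta>" "\<theta> < pi / real g"
  shows "(HE g m1 m2 (cis \<theta>) \<bullet> (\<i> * cis \<theta>)) * Im (cis \<theta> ^ g) = -(real n)*(Re (cis \<theta> ^ g) + delta g m1 m2)"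
    "AS_normsq g m1 m2 (cis \<theta>) = (real g)^2/2*(real m1/(1+Re (cis \<theta> ^ g)) + real m2/(1 - Re (cis \<theta> ^ g))) - real n"
    "Im (cis \<theta> ^ g) > 0" "(Re (cis \<theta> ^ g))^2 + (Im (cis \<theta> ^ g))^2 = 1"
    "HS g m1 m2 (cis \<theta>) = (HE g m1 m2 (cis \<theta>) \<bullet> (\<i> * cis \<theta>)) *\<^sub>R (\<i> * cis \<theta>)"
proof -
  have g1: "1 \<le> g" using adm unfolding iso_admissible_def by auto
  have nx: "norm (cis \<theta>) = 1" by simp
  have xc: "cis \<theta> = Complex (cos \<theta>) (sin \<theta>)" by (simp add: complex_eq_iff)
  have nrm: "(cos \<theta>)^2 + (sin \<theta>)^2 = 1" by simp
  have pos: "\<And>k. 1 \<le> k \<Longrightarrow> k \<le> g \<Longrightarrow> Complex (cos \<theta>) (sin \<theta>) \<bullet> alpha g k > 0"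
    using inner_alpha_pos[OF th] unfolding xc by blast
  show sp: "Im (cis \<theta> ^ g) > 0" using Im_pow_pos[OF th g1] .
  show cs2: "(Re (cis \<theta> ^ g))^2 + (Im (cis \<theta> ^ g))^2 = 1"
    using cmod_power2[of "cis \<theta> ^ g"] by (simp add: norm_power)
  have cs0: "1 + Re (cis \<theta> ^ g) \<noteq> 0" "1 - Re (cis \<theta> ^ g) \<noteq> 0"
  proof -
    show "1 + Re (cis \<theta> ^ g) \<noteq> 0"
    proof
      assume "1 + Re (cis \<theta> ^ g) = 0"
      then have "Re (cis \<theta> ^ g) = -1" by simp
      then have "(Im (cis \<theta> ^ g))^2 = 0" using cs2 by simp
      then show False using sp by simp
    qed
    show "1 - Re (cis \<theta> ^ g) \<noteq> 0"
    proof
      assume "1 - Re (cis \<theta> ^ g) = 0"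
      then have "Re (cis \<theta> ^ g) = 1" by simp
      then have "(Im (cis \<theta> ^ g))^2 = 0" using cs2 by simp
      then show False using sp by simp
    qed
  qed
  note cs = cs0[unfolded xc]
  let ?P1 = "(\<Sum>k=1..g. real (mult m1 m2 k) * Tk g (Complex (cos \<theta>) (sin \<theta>)) k) * Im (Complex (cos \<theta>) (sin \<theta>) ^ g) = -(real n)*(Re (Complex (cos \<theta>) (sin \<theta>) ^ g) + delta g m1 m2)"
  let ?P2 = "(\<Sum>k=1..g. real (mult m1 m2 k) * (Tk g (Complex (cos \<theta>) (sin \<theta>)) k)^2) = (real g)^2/2*(real m1/(1+Re (Complex (cos \<theta>) (sin \<theta>) ^ g)) + real m2/(1 - Re (Complex (cos \<theta>) (sin \<theta>) ^ g))) - real n"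
  have "g = 1 \<or> g = 2 \<or> g = 3 \<or> g = 4 \<or> g = 6" using adm unfolding iso_admissible_def by auto
  moreover { assume gg: "g = 1"
    have "?P1 \<and> ?P2" unfolding gg
      using pt1[OF nrm pos[unfolded gg] cs[unfolded gg] adm[unfolded gg]] by simp }
  moreover { assume gg: "g = 2"
    have "?P1 \<and> ?P2" unfolding gg
      using pt2[OF nrm pos[unfolded gg] cs[unfolded gg] adm[unfolded gg]] by simp }
  moreover { assume gg: "g = 3"
    have "?P1 \<and> ?P2" unfolding gg
      using pt3[OF nrm pos[unfolded gg] cs[unfolded gg] adm[unfolded gg]] by simp }
  moreover { assume gg: "g = 4"
    have "?P1 \<and> ?P2" unfolding gg
      using pt4[OF nrm pos[unfolded gg] cs[unfolded gg] adm[unfolded gg]] by simp }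
  moreover { assume gg: "g = 6"
    have "?P1 \<and> ?P2" unfolding gg
      using pt6[OF nrm pos[unfolded gg] cs[unfolded gg] adm[unfolded gg]] by simp }
  ultimately have P: "?P1 \<and> ?P2" by blast
  show "(HE g m1 m2 (cis \<theta>) \<bullet> (\<i> * cis \<theta>)) * Im (cis \<theta> ^ g) = -(real n)*(Re (cis \<theta> ^ g) + delta g m1 m2)"
    unfolding L_HE using P unfolding xc by blast
  show "AS_normsq g m1 m2 (cis \<theta>) = (real g)^2/2*(real m1/(1+Re (cis \<theta> ^ g)) + real m2/(1 - Re (cis \<theta> ^ g))) - real n"
    unfolding AS_eq[OF nx] using P unfolding xc by blast
  show "HS g m1 m2 (cis \<theta>) = (HE g m1 m2 (cis \<theta>) \<bullet> (\<i> * cis \<theta>)) *\<^sub>R (\<i> * cis \<theta>)"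
    using L_HS[OF nx] .
qed


lemma chamber_cis:
  assumes "z \<in> weyl_chamber g" "norm z = 1"
  shows "\<exists>\<theta>. z = cis \<theta> \<and> 0 < \<theta> \<and> \<theta> < pi / real g"
proof -
  obtain r \<theta> where z: "z = complex_of_real r * cis \<theta>" "r > 0" "0 < \<theta>" "\<theta> < pi / real g"
    using assms(1) unfolding weyl_chamber_def by blast
  have "norm z = r" using z(1,2) by (simp add: norm_mult)
  then have "r = 1" using assms(2) by simp
  then show ?thesis using z by auto
qed

lemma F_val:
  assumes adm: "iso_admissible g m1 m2 n"
  shows "(real g)^2/2*(real m1/(1 + - delta g m1 m2) + real m2/(1 - - delta g m1 m2)) - real n = real ((g - 1) * n)"
proof -
  have a: "g \<in> {1,2,3,4,6}" "1 \<le> m1" "m1 \<le> m2" "odd g \<longrightarrow> m1 = m2" "(m1 + m2) * g = 2 * n"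
    using adm unfolding iso_admissible_def by auto
  have g1: "1 \<le> g" using a(1) by auto
  have rn: "(real m1 + real m2) * real g = 2 * real n" using a(5) by (metis of_nat_add of_nat_mult of_nat_numeral)
  have rg: "real ((g - 1) * n) = real g * real n - real n" using g1 by (simp add: of_nat_diff algebra_simps)
  show ?thesis
  proof (cases "g \<ge> 2")
    case True
    have m: "real m1 > 0" "real m2 > 0" using a by auto
    have d: "delta g m1 m2 = (real m2 - real m1)/(real m2 + real m1)" using True unfolding delta_def by simp
    have e1: "1 + - delta g m1 m2 = 2*real m1/(real m1 + real m2)" unfolding d using m by (simp add: field_simps)
    have e2: "1 - - delta g m1 m2 = 2*real m2/(real m1 + real m2)" unfolding d using m by (simp add: field_simps)
    have "real m1/(1 + - delta g m1 m2) + real m2/(1 - - delta g m1 m2) = real m1 + real m2"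
      unfolding e1 e2 using m by (simp add: field_simps)
    then have "(real g)^2/2*(real m1/(1 + - delta g m1 m2) + real m2/(1 - - delta g m1 m2)) = real g * ((real m1 + real m2) * real g)/2"
      by (simp add: power2_eq_square algebra_simps)
    also have "\<dots> = real g * real n" unfolding rn by simp
    finally show ?thesis unfolding rg by simp
  next
    case False
    then have "g = 1" using g1 by simp
    then have "m1 = m2" "m1 = n" "delta g m1 m2 = 0" using a by (auto simp: delta_def)
    then show ?thesis using \<open>g = 1\<close> by simp
  qed
qed


theorem theorem4p14:
  fixes g m1 m2 n :: nat and y :: "real \<Rightarrow> complex" and \<theta>0 :: real
  assumes adm: "iso_admissible g m1 m2 n"
    and chamber: "\<And>t. t \<le> 0 \<Longrightarrow> y t \<in> weyl_chamber g \<and> norm (y t) = 1"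
    and flow: "\<And>t. t \<le> 0 \<Longrightarrow> (y has_vector_derivative HS g m1 m2 (y t)) (at t within {..0})"
    and init: "y 0 = cis \<theta>0" "0 < \<theta>0" "\<theta>0 < pi / real g"
  shows "((\<lambda>t. AS_normsq g m1 m2 (y t)) \<longlongrightarrow> real ((g - 1) * n)) at_bot \<and>
    (HS g m1 m2 (y 0) \<noteq> 0 \<longrightarrow>
      (let C0 = (real n)\<^sup>2 * (cos (real g * \<theta>0) + delta g m1 m2)\<^sup>2 / (1 - (delta g m1 m2)\<^sup>2)
       in ((\<lambda>t. (norm (HS g m1 m2 (y t)))\<^sup>2 * exp (- 2 * real g * real n * t)) \<longlongrightarrow> C0) at_bot
          \<and> C0 > 0))"
proof -
  define \<delta> where "\<delta> = delta g m1 m2"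
  define K where "K = real g * real n"
  have a: "g \<in> {1,2,3,4,6}" "1 \<le> m1" "m1 \<le> m2" "(m1 + m2) * g = 2 * n"
    using adm unfolding iso_admissible_def by auto
  have g1: "1 \<le> g" using a(1) by auto
  have n1: "1 \<le> n"
  proof (rule ccontr)
    assume "\<not> 1 \<le> n"
    then have "n = 0" by simp
    then have "(m1 + m2) * g = 0" using a(4) by simp
    then show False using a(2) g1 by simp
  qed
  have Kpos: "K > 0" unfolding K_def using g1 n1 by simp
  have \<delta>b: "0 \<le> \<delta>" "\<delta> < 1"
    unfolding \<delta>_def delta_def using a(2,3) by (auto simp: divide_simps)
  have \<delta>2: "\<delta>^2 < 1" using \<delta>b by (simp add: power_less_one_iff)
  have "\<forall>t. \<exists>\<theta>. t \<le> 0 \<longrightarrow> y t = cis \<theta> \<and> 0 < \<theta> \<and> \<theta> < pi / real g"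
    using chamber_cis chamber by blast
  then obtain th where th: "\<And>t. t \<le> 0 \<Longrightarrow> y t = cis (th t) \<and> 0 < th t \<and> th t < pi / real g"
    by metis
  define h where "h t = HE g m1 m2 (y t) \<bullet> (\<i> * y t)" for t
  define c where "c t = Re (y t ^ g)" for t
  define s where "s t = Im (y t ^ g)" for t
  define F where "F u = (real g)^2/2*(real m1/(1+u) + real m2/(1-u)) - real n" for u
  have P: "h t * s t = -(real n)*(c t + \<delta>)" "AS_normsq g m1 m2 (y t) = F (c t)"
    "s t > 0" "(c t)^2 + (s t)^2 = 1" "HS g m1 m2 (y t) = h t *\<^sub>R (\<i> * y t)" if t: "t \<le> 0" for t
  proof -
    have yt: "y t = cis (th t)" "0 < th t" "th t < pi / real g" using th[OF t] by auto
    note pt = point[OF adm yt(2,3), folded yt(1)]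
    show "h t * s t = -(real n)*(c t + \<delta>)" using pt(1) unfolding h_def s_def c_def \<delta>_def .
    show "AS_normsq g m1 m2 (y t) = F (c t)" using pt(2) unfolding F_def c_def .
    show "s t > 0" using pt(3) unfolding s_def .
    show "(c t)^2 + (s t)^2 = 1" using pt(4) unfolding s_def c_def .
    show "HS g m1 m2 (y t) = h t *\<^sub>R (\<i> * y t)" using pt(5) unfolding h_def .
  qed
  have dc: "(c has_field_derivative (K * (c t + \<delta>))) (at t within {..0})" if t: "t \<le> 0" for t
  proof -
    have dp: "((\<lambda>z::complex. z ^ g) has_field_derivative (of_nat g * y t ^ (g - 1))) (at (y t) within y ` {..0})"
      by (auto intro!: derivative_eq_intros)
    have d1: "(((\<lambda>z. z ^ g) \<circ> y) has_vector_derivative (HS g m1 m2 (y t) * (of_nat g * y t ^ (g - 1)))) (at t within {..0})"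
      by (rule field_vector_diff_chain_within[OF flow[OF t] dp])
    have d2: "(c has_field_derivative Re (HS g m1 m2 (y t) * (of_nat g * y t ^ (g - 1)))) (at t within {..0})"
      using has_field_derivative_Re[OF d1] unfolding c_def o_def .
    have yy: "y t * y t ^ (g - 1) = y t ^ g" using g1 by (metis power_Suc Suc_diff_1 less_le_trans zero_less_one)
    have eq: "HS g m1 m2 (y t) * (of_nat g * y t ^ (g - 1)) = complex_of_real (h t * real g) * (\<i> * y t ^ g)"
      unfolding P(5)[OF t] yy[symmetric] by (simp add: scaleR_conv_of_real algebra_simps)
    have "Re (HS g m1 m2 (y t) * (of_nat g * y t ^ (g - 1))) = - (real g * (h t * s t))"
      unfolding eq s_def by simp
    also have "\<dots> = K * (c t + \<delta>)" unfolding P(1)[OF t] K_def by simp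
    finally show ?thesis using d2 by simp
  qed
  have dz: "((\<lambda>t. (c t + \<delta>) * exp (- (K * t))) has_field_derivative 0) (at t within {..0})" if t: "t \<in> {..0}" for t
    using t by (auto intro!: derivative_eq_intros dc simp: algebra_simps)
  obtain C where C: "\<And>t. t \<in> {..0} \<Longrightarrow> (c t + \<delta>) * exp (- (K * t)) = C"
    using has_field_derivative_zero_constant[of "{..0::real}" "\<lambda>t. (c t + \<delta>) * exp (- (K * t))", OF _ dz]
    by (auto simp: convex_real_interval)
  define w0 where "w0 = cos (real g * \<theta>0) + \<delta>"
  have c0: "c 0 = cos (real g * \<theta>0)" unfolding c_def init(1) Complex.DeMoivre by simp
  have Cw: "C = w0" using C[of 0] unfolding w0_def c0 by simp
  have cform: "c t = w0 * exp (K * t) - \<delta>" if t: "t \<le> 0" for t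
  proof -
    have "(c t + \<delta>) * exp (- (K * t)) = w0" using C[of t] t Cw by simp
    then have "(c t + \<delta>) * exp (- (K * t)) * exp (K * t) = w0 * exp (K * t)" by simp
    then have "c t + \<delta> = w0 * exp (K * t)" by (simp add: mult.assoc exp_add[symmetric])
    then show ?thesis by simp
  qed
  have ev: "eventually (\<lambda>t. t \<le> (0::real)) at_bot" by (rule eventually_at_bot_linorderI) auto
  have E: "((\<lambda>t. exp (K * t)) \<longlongrightarrow> 0) at_bot"
  proof -
    have "filterlim (\<lambda>t. K * t) at_bot at_bot"
      using filterlim_tendsto_pos_mult_at_bot[OF tendsto_const Kpos filterlim_ident] .
    then show ?thesis using filterlim_compose[OF exp_at_bot] by blast
  qed
  have CL: "((\<lambda>t. w0 * exp (K * t) - \<delta>) \<longlongrightarrow> - \<delta>) at_bot"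
    using tendsto_diff[OF tendsto_mult[OF tendsto_const E, of w0] tendsto_const[of \<delta>]] by simp
  have part1: "((\<lambda>t. AS_normsq g m1 m2 (y t)) \<longlongrightarrow> real ((g - 1) * n)) at_bot"
  proof -
    have L: "((\<lambda>t. F (w0 * exp (K * t) - \<delta>)) \<longlongrightarrow> F (- \<delta>)) at_bot"
      unfolding F_def using \<delta>b by (intro tendsto_intros CL) auto
    have V: "F (- \<delta>) = real ((g - 1) * n)" using F_val[OF adm] unfolding F_def \<delta>_def .
    have EV: "eventually (\<lambda>t. AS_normsq g m1 m2 (y t) = F (w0 * exp (K * t) - \<delta>)) at_bot"
      using ev by eventually_elim (simp add: P(2) cform)
    show ?thesis using tendsto_cong[OF EV] L V by simp
  qed
  have part2: "((\<lambda>t. (norm (HS g m1 m2 (y t)))\<^sup>2 * exp (- 2 * real g * real n * t)) \<longlongrightarrow> (real n)^2 * w0^2 / (1 - \<delta>^2)) at_bot"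
  proof -
    have L: "((\<lambda>t. (real n)^2 * w0^2 / (1 - (w0 * exp (K * t) - \<delta>)^2)) \<longlongrightarrow> (real n)^2 * w0^2 / (1 - (- \<delta>)^2)) at_bot"
      using \<delta>b \<delta>2 by (intro tendsto_intros CL) auto
    have EV: "eventually (\<lambda>t. (norm (HS g m1 m2 (y t)))\<^sup>2 * exp (- 2 * real g * real n * t)
        = (real n)^2 * w0^2 / (1 - (w0 * exp (K * t) - \<delta>)^2)) at_bot"
      using ev
    proof eventually_elim
      case (elim t)
      have nh: "(norm (HS g m1 m2 (y t)))\<^sup>2 = (h t)^2"
        unfolding P(5)[OF elim] using chamber[OF elim] by (simp add: norm_mult)
      have sp: "s t > 0" using P(3)[OF elim] .
      have s2: "(s t)^2 = 1 - (c t)^2" using P(4)[OF elim] by simp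
      have hs: "h t = - (real n) * (c t + \<delta>) / s t" using P(1)[OF elim] sp by (simp add: field_simps)
      have cw: "c t + \<delta> = w0 * exp (K * t)" using cform[OF elim] by simp
      have ee: "(exp (K * t))^2 * exp (- 2 * real g * real n * t) = 1"
        unfolding K_def by (simp add: power2_eq_square exp_add[symmetric])
      have "(norm (HS g m1 m2 (y t)))\<^sup>2 * exp (- 2 * real g * real n * t)
          = (real n)^2 * w0^2 * ((exp (K * t))^2 * exp (- 2 * real g * real n * t)) / (s t)^2"
        unfolding nh hs cw by (simp add: power2_eq_square field_simps)
      also have "\<dots> = (real n)^2 * w0^2 / (1 - (w0 * exp (K * t) - \<delta>)^2)"
        unfolding ee s2 cform[OF elim] by simp
      finally show ?case .
    qed
    show ?thesis using tendsto_cong[OF EV] L by simp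
  qed
  have pos: "(real n)^2 * w0^2 / (1 - \<delta>^2) > 0" if hs0: "HS g m1 m2 (y 0) \<noteq> 0"
  proof -
    have "h 0 \<noteq> 0" using hs0 P(5)[of 0] by auto
    then have "h 0 * s 0 \<noteq> 0" using P(3)[of 0] by simp
    then have "real n * w0 \<noteq> 0" using P(1)[of 0] c0 unfolding w0_def by simp
    moreover have "1 - \<delta>^2 > 0" using \<delta>b by (simp add: power_less_one_iff)
    ultimately have "(real n * w0)^2 > 0" "1 - \<delta>^2 > 0" by auto
    then show ?thesis by (simp add: power_mult_distrib)
  qed
  show ?thesis
    unfolding Let_def using part1 part2 pos unfolding w0_def \<delta>_def by simp
qed


end
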